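(* Let $F$ be an algebraically closed field of characteristic $\neq 2$, $R=F[t]$ with the involution ${}^*$ described in the context, and let $A\in M_n(R)$ satisfy $A^*=A$ and $\gcd(A)=1$. Then there exists a column vector $v\in R^n$ such that $v^*Av=1$.
   Context: $R=F[t]$ is the polynomial ring over $F$, and ${}^*$ is the $F$-algebra involution of $R$ that is the identity on $F$ and sends $t$ to $-t$. For a matrix (or column vector) $A=(a_{ij})$ over $R$, $A^*$ is the transpose of the matrix obtained by applying ${}^*$ entrywise. $\gcd(A)$ denotes the monic generator (or $0$) of the ideal of $R$ generated by all entries of $A$. *)

theory Defs
  imports "HOL-Computational_Algebra.Computational_Algebra"
begin

definition pstar :: "'a::comm_ring_1 poly \<Rightarrow> 'a poly" where
  "pstar p = pcompose p [:0, -1:]"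

text \<open>n x n matrices over R as functions nat => nat => R (indices < n), column vectors as nat => R.
  A^* = A means A i j = (A j i)^* for all i, j < n.\<close>
definition self_adjoint :: "nat \<Rightarrow> (nat \<Rightarrow> nat \<Rightarrow> 'a::comm_ring_1 poly) \<Rightarrow> bool" where
  "self_adjoint n A \<longleftrightarrow> (\<forall>i<n. \<forall>j<n. A i j = pstar (A j i))"

definition mat_gcd :: "nat \<Rightarrow> (nat \<Rightarrow> nat \<Rightarrow> 'a::field_gcd poly) \<Rightarrow> 'a poly" where
  "mat_gcd n A = Gcd {A i j | i j. i < n \<and> j < n}"

definition herm_form :: "nat \<Rightarrow> (nat \<Rightarrow> nat \<Rightarrow> 'a::comm_ring_1 poly) \<Rightarrow> (nat \<Rightarrow> 'a poly) \<Rightarrow> 'a poly" where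
  "herm_form n A v = (\<Sum>i<n. \<Sum>j<n. pstar (v i) * A i j * v j)"

end

theory Submission
  imports Defs
begin


lemma pstar_add [simp]: "pstar (p + q) = pstar p + pstar q"
  by (simp add: pstar_def pcompose_add)
lemma pstar_mult [simp]: "pstar (p * q) = pstar p * pstar q"
  by (simp add: pstar_def pcompose_mult)
lemma pstar_0 [simp]: "pstar 0 = 0"
  by (simp add: pstar_def)
lemma pstar_const [simp]: "pstar [:c:] = [:c:]"
  by (simp add: pstar_def)
lemma pstar_1 [simp]: "pstar 1 = 1"
  using pstar_const[of 1] by (simp add: one_pCons)
lemma pstar_uminus [simp]: "pstar (- p) = - pstar p"
  by (simp add: pstar_def pcompose_uminus)
lemma pstar_diff [simp]: "pstar (p - q) = pstar p - pstar q"
  by (simp add: pstar_def pcompose_diff)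
lemma pstar_smult [simp]: "pstar (smult c p) = smult c (pstar p)"
  by (simp add: pstar_def pcompose_smult)
lemma poly_pstar [simp]: "poly (pstar p) x = poly p (- x)"
  by (simp add: pstar_def poly_pcompose)
lemma pstar_pstar [simp]: "pstar (pstar p) = p"
proof -
  have "pstar (pstar p) = p \<circ>\<^sub>p ([:0, -1:] \<circ>\<^sub>p [:0, -1:])"
    by (simp add: pstar_def pcompose_assoc)
  also have "[:0, -1:] \<circ>\<^sub>p [:0, -1:] = ([:0, 1:] :: 'a poly)"
    by (simp add: pcompose_pCons)
  finally show ?thesis by (simp add: pcompose_idR)
qed
lemma pstar_X [simp]: "pstar [:0, c:] = [:0, -c:]"
  by (simp add: pstar_def pcompose_pCons)
lemma pstar_power [simp]: "pstar (p ^ k) = pstar p ^ k"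
  by (induction k) auto
lemma pstar_of_nat [simp]: "pstar (of_nat k) = of_nat k"
  by (simp add: of_nat_poly)
lemma pstar_numeral [simp]: "pstar (numeral k) = numeral k"
  by (metis of_nat_numeral pstar_of_nat)
lemma pstar_sum: "pstar (sum f A) = (\<Sum>x\<in>A. pstar (f x))"
  by (induction A rule: infinite_finite_induct) auto
lemma pstar_inj: "pstar p = pstar q \<longleftrightarrow> p = q"
  by (metis pstar_pstar)
lemma pstar_eq_0_iff [simp]: "pstar p = 0 \<longleftrightarrow> p = 0"
  by (metis pstar_0 pstar_pstar)



definition bf :: "nat \<Rightarrow> (nat \<Rightarrow> nat \<Rightarrow> 'a::comm_ring_1 poly) \<Rightarrow> (nat \<Rightarrow> 'a poly) \<Rightarrow> (nat \<Rightarrow> 'a poly) \<Rightarrow> 'a poly" where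
  "bf n A u v = (\<Sum>i<n. \<Sum>j<n. pstar (u i) * A i j * v j)"

lemma herm_form_bf: "herm_form n A v = bf n A v v"
  by (simp add: herm_form_def bf_def)

lemma bf_lin_r: "bf n A u (\<lambda>k. p * v k + q * w k) = p * bf n A u v + q * bf n A u w"
  by (simp add: bf_def algebra_simps sum.distrib sum_distrib_left)

lemma bf_lin_l: "bf n A (\<lambda>k. p * v k + q * w k) u = pstar p * bf n A v u + pstar q * bf n A w u"
  by (simp add: bf_def algebra_simps sum.distrib sum_distrib_left)

lemma bf_scale_r: "bf n A u (\<lambda>k. p * v k) = p * bf n A u v"
  by (simp add: bf_def algebra_simps sum.distrib sum_distrib_left)

lemma bf_scale_l: "bf n A (\<lambda>k. p * v k) u = pstar p * bf n A v u"
  by (simp add: bf_def algebra_simps sum.distrib sum_distrib_left)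

lemma bf_swap:
  assumes "self_adjoint n A"
  shows "bf n A v u = pstar (bf n A u v)"
proof -
  have "pstar (bf n A u v) = (\<Sum>i<n. \<Sum>j<n. u i * pstar (A i j) * pstar (v j))"
    by (simp add: bf_def pstar_sum)
  also have "\<dots> = (\<Sum>i<n. \<Sum>j<n. u i * A j i * pstar (v j))"
    using assms unfolding self_adjoint_def
    by (intro sum.cong refl) (metis lessThan_iff pstar_pstar)
  also have "\<dots> = (\<Sum>j<n. \<Sum>i<n. pstar (v j) * A j i * u i)"
    by (subst sum.swap) (simp add: mult_ac)
  finally show ?thesis by (simp add: bf_def)
qed

definition delta :: "nat \<Rightarrow> nat \<Rightarrow> 'a::comm_ring_1 poly" where
  "delta i = (\<lambda>k. if k = i then 1 else 0)"

lemma mult_if01: "(x::'a::comm_ring_1) * (if P then 1 else 0) = (if P then x else 0)"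
  by simp

lemma bf_delta:
  assumes "i < n" "j < n"
  shows "bf n A (delta i) (delta j) = A i j"
proof -
  have "bf n A (delta i) (delta j) = (\<Sum>i'<n. if i' = i then (\<Sum>j'<n. if j' = j then A i' j' else 0) else 0)"
    unfolding bf_def delta_def by (intro sum.cong refl) (auto simp: mult_if01)
  also have "\<dots> = A i j"
    using assms by simp
  finally show ?thesis .
qed



lemma exists_pair_one:
  fixes A :: "nat \<Rightarrow> nat \<Rightarrow> 'a::field_gcd poly"
  assumes "mat_gcd n A = 1"
  shows "\<exists>x y. bf n A x y = 1"
proof -
  have ex: "\<exists>x y. bf n A x y \<noteq> 0"
  proof (rule ccontr)
    assume "\<not> ?thesis"
    hence "\<forall>i<n. \<forall>j<n. A i j = 0" using bf_delta by metis
    hence "{A i j | i j. i < n \<and> j < n} \<subseteq> {0}" by auto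
    hence "Gcd {A i j | i j. i < n \<and> j < n} = 0" by (simp add: Gcd_0_iff)
    with assms show False by (simp add: mat_gcd_def)
  qed
  define P where "P = (\<lambda>k. \<exists>x y. bf n A x y \<noteq> 0 \<and> degree (bf n A x y) = k)"
  define D where "D = (LEAST k. P k)"
  have "\<exists>k. P k" using ex unfolding P_def by blast
  hence "P D" unfolding D_def by (rule LeastI_ex)
  then obtain x y where xy: "bf n A x y \<noteq> 0" "degree (bf n A x y) = D"
    unfolding P_def by blast
  have minD: "D \<le> degree (bf n A x' y')" if "bf n A x' y' \<noteq> 0" for x' y'
    unfolding D_def by (rule Least_le) (use that in \<open>auto simp: P_def\<close>)
  define g where "g = bf n A x y"
  have g0: "g \<noteq> 0" using xy by (simp add: g_def)
  have step1: "g dvd bf n A x' u \<and> g dvd bf n A u y'" if "bf n A x' y' = g" for x' y' u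
  proof
    let ?r = "bf n A x' u"
    define u' where "u' = (\<lambda>k. 1 * u k + (- (?r div g)) * y' k)"
    have e: "bf n A x' u' = ?r mod g"
      unfolding u'_def by (simp only: bf_lin_r) (simp add: that minus_div_mult_eq_mod[symmetric] algebra_simps)
    have "?r mod g = 0"
    proof (rule ccontr)
      assume nz: "?r mod g \<noteq> 0"
      have "D \<le> degree (?r mod g)" using minD[of x' u'] e nz by simp
      moreover have "degree (?r mod g) < degree g" using degree_mod_less'[OF g0 nz] .
      ultimately show False using xy by (simp add: g_def)
    qed
    thus "g dvd ?r" by (simp add: mod_eq_0_iff_dvd)
  next
    let ?r = "bf n A u y'"
    define u' where "u' = (\<lambda>k. 1 * u k + (- pstar (?r div g)) * x' k)"
    have e: "bf n A u' y' = ?r mod g"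
      unfolding u'_def by (simp only: bf_lin_l) (simp add: that minus_div_mult_eq_mod[symmetric] algebra_simps)
    have "?r mod g = 0"
    proof (rule ccontr)
      assume nz: "?r mod g \<noteq> 0"
      have "D \<le> degree (?r mod g)" using minD[of u' y'] e nz by simp
      moreover have "degree (?r mod g) < degree g" using degree_mod_less'[OF g0 nz] .
      ultimately show False using xy by (simp add: g_def)
    qed
    thus "g dvd ?r" by (simp add: mod_eq_0_iff_dvd)
  qed
  have gA: "g dvd A i j" if "i < n" "j < n" for i j
  proof -
    from step1[of x y "delta i"] obtain k where k: "bf n A (delta i) y = g * k"
      by (auto simp: g_def elim!: dvdE)
    define x' where "x' = (\<lambda>l. (1 - pstar k) * x l + 1 * delta i l)"
    have "bf n A x' y = g"
      unfolding x'_def by (simp only: bf_lin_l) (simp add: k g_def[symmetric] algebra_simps)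
    from step1[OF this, of "delta j"] have "g dvd bf n A x' (delta j)" by simp
    also have "bf n A x' (delta j) = (1 - k) * bf n A x (delta j) + A i j"
      unfolding x'_def by (simp only: bf_lin_l) (simp add: bf_delta that)
    finally have "g dvd (1 - k) * bf n A x (delta j) + A i j" .
    moreover have "g dvd (1 - k) * bf n A x (delta j)"
      using step1[of x y "delta j"] by (simp add: g_def)
    ultimately show ?thesis by (simp add: dvd_add_right_iff)
  qed
  have "g dvd mat_gcd n A"
    unfolding mat_gcd_def by (rule Gcd_greatest) (auto intro: gA)
  hence "g dvd 1" using assms by simp
  then obtain u where u: "1 = g * u" by (elim dvdE)
  have "bf n A x (\<lambda>l. u * y l) = 1"
    by (simp only: bf_scale_r) (simp add: g_def[symmetric] u mult.commute)
  thus ?thesis by blast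
qed



lemma pstar_pCons: "pstar (pCons a p) = [:a:] + [:0, -1:] * pstar p"
  by (simp add: pstar_def pcompose_pCons)

lemma pstar_pCons0: "pstar (pCons 0 p) = pCons 0 (- pstar p)"
  by (simp add: pstar_pCons)

lemma alg_closed_infinite: "infinite (UNIV :: 'a::alg_closed_field set)"
proof
  assume fin: "finite (UNIV::'a set)"
  define P where "P = (\<Prod>x\<in>(UNIV::'a set). [:-x, 1:])"
  have P0: "P \<noteq> 0" unfolding P_def using fin by (simp add: prod_zero_iff)
  have root: "poly P x = 0" for x
    unfolding P_def poly_prod using fin by (intro prod_zero) auto
  have "degree P \<noteq> 0"
  proof
    assume "degree P = 0"
    then obtain c where "P = [:c:]" by (elim degree_eq_zeroE)
    with P0 root[of 0] show False by simp
  qed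
  hence "degree (P + 1) > 0" by (simp add: degree_add_eq_left)
  then obtain z where "poly (P + 1) z = 0" using alg_closed_imp_poly_has_root by blast
  with root[of z] show False by simp
qed

definition sq :: "'a::alg_closed_field \<Rightarrow> 'a" where
  "sq r = (SOME y. y ^ 2 = r)"

lemma sq_sq [simp]: "sq r ^ 2 = r"
proof -
  have "\<exists>y::'a. y ^ 2 = r" by (rule nth_root_exists) simp
  thus ?thesis unfolding sq_def by (rule someI_ex)
qed

definition OS :: "'a::alg_closed_field poly \<Rightarrow> bool" where
  "OS p \<longleftrightarrow> (\<forall>b. poly p b = 0 \<longrightarrow> sq (b ^ 2) = b)"

lemma OS_mult: "OS p \<Longrightarrow> OS q \<Longrightarrow> OS (p * q)"
  by (auto simp: OS_def)

lemma OS_pair: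
  fixes p :: "'a::alg_closed_field poly"
  assumes two: "(2::'a) \<noteq> 0" and "OS p" "poly p 0 \<noteq> 0" "poly p b = 0"
  shows "poly p (- b) \<noteq> 0"
proof
  assume nb: "poly p (- b) = 0"
  have s1: "sq (b^2) = b" using assms(2,4) unfolding OS_def by blast
  have s2: "sq ((-b)^2) = - b" using assms(2) nb unfolding OS_def by blast
  have "b = - b" using s1 s2 by simp
  hence "(2::'a) * b = 0" by (simp add: algebra_simps)
  with two have "b = 0" by simp
  with assms show False by simp
qed

lemma norm_OS:
  fixes h :: "'a::alg_closed_field poly"
  assumes two: "(2::'a) \<noteq> 0" and "pstar h = h" and "poly h 0 \<noteq> 0"
  shows "\<exists>z. pstar z * z = h \<and> OS z"
  using assms(2,3)
proof (induction "degree h" arbitrary: h rule: less_induct)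
  case (less h)
  show ?case
  proof (cases "degree h = 0")
    case True
    then obtain c where h: "h = [:c:]" by (elim degree_eq_zeroE)
    with less.prems have c0: "c \<noteq> 0" by simp
    define k where "k = sq c"
    have kk: "k * k = c" using sq_sq[of c] by (simp add: k_def power2_eq_square)
    hence k0: "k \<noteq> 0" using c0 by auto
    have "pstar [:k:] * [:k:] = h" by (simp add: h kk)
    moreover have "OS [:k:]" using k0 by (simp add: OS_def)
    ultimately show ?thesis by blast
  next
    case False
    then obtain b where b: "poly h b = 0" using alg_closed_imp_poly_has_root by blast
    have hm: "poly h (- x) = poly h x" for x
      using poly_pstar[of h x] less.prems(1) by simp
    have b0: "b \<noteq> 0" using b less.prems(2) by auto
    define g where "g = sq (b ^ 2)"
    have gg: "g ^ 2 = b ^ 2" by (simp add: g_def)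
    hence "g = b \<or> g = - b" by (simp add: power2_eq_iff)
    hence hg: "poly h g = 0" "poly h (- g) = 0" using b hm by auto
    have g0: "g \<noteq> 0" using gg b0 by auto
    have "[:-g, 1:] dvd h" using hg(1) by (simp add: poly_eq_0_iff_dvd)
    then obtain h1 where h1: "h = [:-g, 1:] * h1" by (elim dvdE)
    have "poly h (- g) = (- g - g) * poly h1 (- g)" by (simp add: h1)
    moreover have "- g - g \<noteq> 0"
    proof
      assume "- g - g = 0"
      hence "2 * g = 0" by (simp add: algebra_simps)
      with two g0 show False by simp
    qed
    ultimately have "poly h1 (- g) = 0" using hg(2) by simp
    hence "[:- (- g), 1:] dvd h1" by (simp only: poly_eq_0_iff_dvd)
    then obtain h2 where h2: "h1 = [:g, 1:] * h2" by (auto elim!: dvdE)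
    define q where "q = [:- (g * g), 0, 1:]"
    have hq: "h = q * h2" by (simp add: h1 h2 q_def algebra_simps)
    have q0: "q \<noteq> 0" by (simp add: q_def)
    have pq: "pstar q = q" by (simp add: q_def pstar_pCons)
    have "q * pstar h2 = q * h2" using less.prems(1) by (simp add: hq pq)
    hence ph2: "pstar h2 = h2" using q0 by simp
    have h20: "poly h2 0 \<noteq> 0" using less.prems(2) by (simp add: hq)
    have "degree h = degree q + degree h2"
      unfolding hq using q0 less.prems(2) by (intro degree_mult_eq) (auto simp: hq)
    hence "degree h2 < degree h" by (simp add: q_def)
    from less.hyps[OF this ph2 h20] obtain z2 where z2: "pstar z2 * z2 = h2" "OS z2" by blast
    define k where "k = sq (-1::'a)"
    have kk: "k * k = -1" using sq_sq[of "-1"] by (simp add: k_def power2_eq_square)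
    define z where "z = [:- (k * g), k:] * z2"
    define L where "L = [:- (k * g), k:]"
    have "pstar L * L = q"
      by (simp add: L_def pstar_pCons q_def algebra_simps kk)
    moreover have "pstar z * z = (pstar L * L) * (pstar z2 * z2)"
      unfolding z_def L_def[symmetric] pstar_mult by (simp only: mult_ac)
    ultimately have "pstar z * z = h"
      by (simp add: hq z2(1))
    moreover have "OS z"
    proof -
      have "OS [:- (k * g), k:]"
      proof (unfold OS_def, intro allI impI)
        fix x assume "poly [:- (k * g), k:] x = 0"
        hence "k * (x - g) = 0" by (simp add: algebra_simps)
        moreover have "k \<noteq> 0" using kk by auto
        ultimately have "x = g" by simp
        thus "sq (x ^ 2) = x" using gg by (simp add: g_def)
      qed
      thus ?thesis unfolding z_def using z2(2) by (rule OS_mult)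
    qed
    ultimately show ?thesis by blast
  qed
qed

lemma even_decomp:
  fixes E :: "'a::field poly"
  assumes two: "(2::'a) \<noteq> 0" and "pstar E = E" and "E \<noteq> 0"
  shows "\<exists>j E1. E = [:0, 0, 1:] ^ j * E1 \<and> pstar E1 = E1 \<and> poly E1 0 \<noteq> 0"
  using assms(2,3)
proof (induction "degree E" arbitrary: E rule: less_induct)
  case (less E)
  show ?case
  proof (cases "poly E 0 = 0")
    case False
    thus ?thesis using less.prems by (intro exI[of _ 0] exI[of _ E]) auto
  next
    case True
    hence "[:- 0, 1:] dvd E" by (simp only: poly_eq_0_iff_dvd)
    then obtain E' where E': "E = [:0, 1:] * E'" by (auto elim!: dvdE)
    have "pCons 0 (- pstar E') = pCons 0 E'"
      using less.prems(1) by (simp add: E' pstar_pCons0)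
    hence pE': "pstar E' = - E'" by (metis minus_minus pCons_eq_iff)
    have "poly E' 0 = - poly E' 0" using poly_pstar[of E' 0] pE' by simp
    hence "2 * poly E' 0 = 0" by (simp add: algebra_simps)
    with two have "poly E' 0 = 0" by simp
    hence "[:- 0, 1:] dvd E'" by (simp only: poly_eq_0_iff_dvd)
    then obtain E'' where E'': "E' = [:0, 1:] * E''" by (auto elim!: dvdE)
    have EE: "E = [:0, 0, 1:] * E''" by (simp add: E' E'' algebra_simps)
    have "pCons 0 (- pstar E'') = pCons 0 (- E'')"
      using pE' by (simp add: E'' pstar_pCons0)
    hence pE'': "pstar E'' = E''" by simp
    have E''0: "E'' \<noteq> 0" using less.prems(2) EE by auto
    have "degree E = 2 + degree E''" unfolding EE using E''0 by (subst degree_mult_eq) auto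
    hence "degree E'' < degree E" by simp
    from less.hyps[OF this pE'' E''0] obtain j E1 where
      "E'' = [:0, 0, 1:] ^ j * E1" "pstar E1 = E1" "poly E1 0 \<noteq> 0" by blast
    thus ?thesis by (intro exI[of _ "Suc j"] exI[of _ E1]) (simp add: EE mult_ac)
  qed
qed

lemma no_common_root_bezout:
  fixes p q :: "'a::{alg_closed_field,field_gcd} poly"
  assumes "p \<noteq> 0" and nc: "\<And>x. poly p x = 0 \<Longrightarrow> poly q x \<noteq> 0"
  shows "\<exists>u v. u * p + v * q = 1"
proof -
  define g where "g = gcd p q"
  have g0: "g \<noteq> 0" using assms(1) by (simp add: g_def)
  have "degree g = 0"
  proof (rule ccontr)
    assume "degree g \<noteq> 0"
    then obtain z where z: "poly g z = 0" using alg_closed_imp_poly_has_root by blast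
    have "poly p z = 0" using z unfolding g_def
      by (metis gcd_dvd1 dvd_trans poly_eq_0_iff_dvd)
    moreover have "poly q z = 0" using z unfolding g_def
      by (metis gcd_dvd2 dvd_trans poly_eq_0_iff_dvd)
    ultimately show False using nc by blast
  qed
  hence "is_unit g" using g0 by (simp add: is_unit_iff_degree)
  hence "g = 1" unfolding g_def by (metis is_unit_normalize normalize_gcd)
  thus ?thesis using bezout_coefficients_fst_snd[of p q] unfolding g_def by metis
qed



lemma pstar_bf:
  assumes "self_adjoint n A"
  shows "pstar (bf n A v v) = bf n A v v"
  using bf_swap[OF assms, of v v] by simp

lemma lemmaA:
  fixes A :: "nat \<Rightarrow> nat \<Rightarrow> 'a::field poly"
  assumes two: "(2::'a) \<noteq> 0" and sa: "self_adjoint n A"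
    and Qe: "bf n A e e = 0"
    and eq: "1 - bf n A z z = bf n A e z * r1 + pstar (bf n A e z) * r2"
  shows "\<exists>v. bf n A v v = 1"
proof -
  define c where "c = bf n A e z"
  define X where "X = 1 - bf n A z z"
  have pX: "pstar X = X" using pstar_bf[OF sa, of z] by (simp add: X_def)
  define \<rho> where "\<rho> = smult (1/2) (r1 + pstar r2)"
  define v where "v = (\<lambda>k. 1 * z k + pstar \<rho> * e k)"
  have bze: "bf n A z e = pstar c" using bf_swap[OF sa, of z e] by (simp add: c_def)
  have "bf n A v v = bf n A z z + (pstar \<rho> * pstar c + \<rho> * c)"
    unfolding v_def bf_lin_l bf_lin_r using Qe bze by (simp add: c_def algebra_simps)
  also have "pstar \<rho> * pstar c + \<rho> * c = smult (1/2) ((c * r1 + pstar c * r2) + (pstar c * pstar r1 + c * pstar r2))"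
    unfolding \<rho>_def by (simp add: algebra_simps smult_add_right)
  also have "\<dots> = smult (1/2) (X + X)"
  proof -
    have e1: "X = c * r1 + pstar c * r2" using eq by (simp add: X_def c_def)
    have "X = pstar (c * r1 + pstar c * r2)" using pX e1 by simp
    hence e2: "X = pstar c * pstar r1 + c * pstar r2" by simp
    show ?thesis using e1 e2 by simp
  qed
  also have "\<dots> = smult (1/2 + 1/2) X" by (simp only: smult_add_right smult_add_left)
  also have "(1/2 + 1/2 :: 'a) = 1" using two by (simp add: add_divide_distrib[symmetric])
  also have "smult 1 X = X" by simp
  finally show ?thesis by (auto simp: X_def)
qed



lemma smult_half:
  fixes p :: "'a::field poly"
  assumes "(2::'a::field) \<noteq> 0"
  shows "smult (1/2) (p + p) = p"
proof -
  have "smult (1/2) (p + p) = smult (1/2 + 1/2) p" by (simp only: smult_add_right smult_add_left)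
  also have "(1/2 + 1/2 :: 'a) = 1" using assms by (simp add: add_divide_distrib[symmetric])
  finally show ?thesis by simp
qed

lemma negX_power: "[:0, - c:] ^ j = smult ((- c) ^ j) ([:0, 1:] ^ j)"
proof -
  have "[:0, - c:] = smult (- c) [:0, 1:]" by simp
  thus ?thesis by (simp only: smult_power)
qed

lemma fin_lin:
  fixes x W :: "'a::field"
  assumes "x \<noteq> 0" "(2::'a) \<noteq> 0"
  shows "finite {t. (1 - t * x) - (1 + t * x) * W = 0}"
proof (cases "x * (1 + W) = 0")
  case True
  hence "W = -1" using assms(1) by (simp add: add_eq_0_iff)
  hence "{t. (1 - t * x) - (1 + t * x) * W = 0} = {}" using assms(2) by (auto simp: algebra_simps)
  thus ?thesis by simp
next
  case False
  have "{t. (1 - t * x) - (1 + t * x) * W = 0} \<subseteq> {(1 - W) / (x * (1 + W))}"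
  proof
    fix t assume "t \<in> {t. (1 - t * x) - (1 + t * x) * W = 0}"
    hence "(1 - W) = t * (x * (1 + W))" by (simp add: algebra_simps)
    thus "t \<in> {(1 - W) / (x * (1 + W))}" using False by (simp add: field_simps)
  qed
  thus ?thesis by (rule finite_subset) simp
qed



lemma binary_main:
  fixes A :: "nat \<Rightarrow> nat \<Rightarrow> 'a::{alg_closed_field,field_gcd} poly"
  assumes two: "(2::'a) \<noteq> 0" and sa: "self_adjoint n A" and bxy: "bf n A x y = 1"
    and a0: "bf n A x x \<noteq> 0" and d0: "bf n A y y \<noteq> 0"
    and E0: "1 - bf n A x x * bf n A y y \<noteq> 0"
  shows "\<exists>v. bf n A v v = 1"
proof -
  define a where "a = bf n A x x"
  define d where "d = bf n A y y"
  have pa: "pstar a = a" unfolding a_def by (rule pstar_bf[OF sa])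
  have pd: "pstar d = d" unfolding d_def by (rule pstar_bf[OF sa])
  have byx: "bf n A y x = 1" using bf_swap[OF sa, of y x] bxy by simp
  define E where "E = 1 - a * d"
  have E0': "E \<noteq> 0" using E0 by (simp add: E_def a_def d_def)
  have pE: "pstar E = E" by (simp add: E_def pa pd)
  obtain j E1 where EE: "E = [:0,0,1:]^j * E1" "pstar E1 = E1" "poly E1 0 \<noteq> 0"
    using even_decomp[OF two pE E0'] by blast
  obtain zp where zp: "pstar zp * zp = E1" "OS zp" using norm_OS[OF two EE(2) EE(3)] by blast
  define T where "T = ([:0, 1:] :: 'a poly) ^ j"
  have pT: "pstar T = smult ((-1)^j) T" by (simp add: T_def negX_power)
  obtain h g0 where h: "pstar h = h" "poly h 0 \<noteq> 0" "1 - d * h = T * g0"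
  proof (cases "j = 0")
    case True
    then show ?thesis by (intro that[of 1 "1 - d"]) (simp_all add: T_def)
  next
    case False
    have "poly E 0 = 0" using EE(1) False by simp
    hence "poly a 0 * poly d 0 = 1" by (simp add: E_def)
    hence pd0: "poly d 0 \<noteq> 0" by auto
    have "\<exists>u v. u * d + v * T = 1"
    proof (rule no_common_root_bezout)
      show "d \<noteq> 0" using d0 by (simp add: d_def)
    next
      fix t assume "poly d t = 0"
      hence "t \<noteq> 0" using pd0 by auto
      thus "poly T t \<noteq> 0" by (simp add: T_def)
    qed
    then obtain u v where uv: "u * d + v * T = 1" by blast
    define hh where "hh = smult (1/2) (u + pstar u)"
    define gg where "gg = smult (1/2) (v + smult ((-1)^j) (pstar v))"
    have "1 - d * hh = smult (1/2) ((1 - d * u) + pstar (1 - d * u))"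
    proof -
      have "smult (1/2) ((1 - d * u) + pstar (1 - d * u)) = smult (1/2) (1 + 1) - d * hh"
        by (simp add: hh_def pd algebra_simps smult_add_right smult_diff_right)
      also have "smult (1/2) (1 + 1) = (1 :: 'a poly)" by (rule smult_half[OF two])
      finally show ?thesis by simp
    qed
    also have "1 - d * u = v * T" using uv by (simp add: algebra_simps)
    also have "smult (1/2) (v * T + pstar (v * T)) = T * gg"
      by (simp add: gg_def pT algebra_simps smult_add_right)
    finally have e: "1 - d * hh = T * gg" .
    have "poly (1 - d * hh) 0 = 0" using False by (simp add: e T_def)
    hence "poly hh 0 \<noteq> 0" by auto
    moreover have "pstar hh = hh" by (simp add: hh_def add.commute)
    ultimately show ?thesis using e by (intro that) auto
  qed
  obtain zh where zh: "pstar zh * zh = h" "OS zh" using norm_OS[OF two h(1) h(2)] by blast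
  define ii where "ii = sq (-1::'a)"
  have ii2: "ii * ii = -1" using sq_sq[of "-1::'a"] by (simp add: ii_def power2_eq_square)
  define w0 where "w0 = [:0, ii:] ^ j * pstar zp"
  define \<epsilon> where "\<epsilon> = (if poly w0 0 = 1 then -1 else (1::'a))"
  define w where "w = smult \<epsilon> w0"
  have ee: "\<epsilon> * \<epsilon> = 1" by (simp add: \<epsilon>_def)
  have e0: "\<epsilon> \<noteq> 0" by (simp add: \<epsilon>_def)
  have w01: "poly w 0 \<noteq> 1"
  proof (cases "poly w0 0 = 1")
    case True
    hence "poly w 0 = -1" by (simp add: w_def \<epsilon>_def)
    moreover have "(-1::'a) \<noteq> 1"
    proof
      assume "(-1::'a) = 1" hence "(2::'a) = 0" by (simp add: eq_neg_iff_add_eq_0)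
      with two show False by simp
    qed
    ultimately show ?thesis by simp
  next
    case False
    thus ?thesis by (simp add: w_def \<epsilon>_def)
  qed
  have Nw: "pstar w * w = E"
  proof -
    have "pstar w * w = smult (\<epsilon> * \<epsilon>) (([:0, - ii:] * [:0, ii:]) ^ j * (pstar zp * zp))"
      unfolding w_def w0_def
      by (simp only: pstar_smult pstar_mult pstar_power pstar_X pstar_pstar mult_smult_left
          mult_smult_right smult_smult power_mult_distrib mult_ac)
    also have "[:0, - ii:] * [:0, ii:] = [:0, 0, 1:]" using ii2 by simp
    finally show ?thesis using ee by (simp add: zp(1) EE(1))
  qed
  have pw: "pstar w = smult (\<epsilon> * (- ii) ^ j) (T * zp)"
    by (simp add: w_def w0_def T_def negX_power)
  define Z where "Z = zh * zp"
  have OSZ: "OS Z" unfolding Z_def using zh(2) zp(2) by (rule OS_mult)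
  have "poly h 0 = poly zh 0 * poly zh 0" using zh(1) poly_pstar[of zh 0] by (metis minus_zero poly_mult)
  hence zh0: "poly zh 0 \<noteq> 0" using h(2) by auto
  have "poly E1 0 = poly zp 0 * poly zp 0" using zp(1) poly_pstar[of zp 0] by (metis minus_zero poly_mult)
  hence zp0: "poly zp 0 \<noteq> 0" using EE(3) by auto
  have Z0: "poly Z 0 \<noteq> 0" using zh0 zp0 by (simp add: Z_def)
  hence Zne: "Z \<noteq> 0" by auto
  define M where "M = (\<lambda>t b. (1 - t * b) - (1 + t * b) * poly w b)"
  have adne: "a * d \<noteq> 0" using a0 d0 by (simp add: a_def d_def)
  define B where "B = (\<Union>r\<in>{r. poly Z r = 0}. {t. M t (- r) = 0}) \<union> (\<Union>b\<in>{b. poly (a * d) b = 0 \<and> b \<noteq> 0}. {t. M t b = 0})"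
  have "finite B"
    unfolding B_def
  proof (intro finite_UnI finite_UN_I)
    show "finite {r. poly Z r = 0}" using Zne by (rule poly_roots_finite)
    show "finite {b. poly (a * d) b = 0 \<and> b \<noteq> 0}"
      using poly_roots_finite[OF adne] by (rule finite_subset[rotated]) auto
  next
    fix r assume "r \<in> {r. poly Z r = 0}"
    hence "- r \<noteq> 0" using Z0 by auto
    thus "finite {t. M t (- r) = 0}" unfolding M_def by (rule fin_lin[OF _ two])
  next
    fix b assume "b \<in> {b. poly (a * d) b = 0 \<and> b \<noteq> 0}"
    hence "b \<noteq> 0" by auto
    thus "finite {t. M t b = 0}" unfolding M_def by (rule fin_lin[OF _ two])
  qed
  then obtain \<tau> where \<tau>: "\<tau> \<notin> B" using ex_new_if_finite[OF alg_closed_infinite] by blast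
  define V where "V = [:1, \<tau>:]"
  define Vs where "Vs = [:1, - \<tau>:]"
  have pV: "pstar V = Vs" by (simp add: V_def Vs_def pstar_pCons)
  have pVs: "pstar Vs = V" using pV by (metis pstar_pstar)
  define m where "m = Vs - V * w"
  have pm: "poly m b = M \<tau> b" for b by (simp add: m_def M_def V_def Vs_def algebra_simps)
  define P where "P = V * w - Vs"
  define q where "q = a * Vs"
  have pP: "pstar P = Vs * pstar w - V" by (simp add: P_def pV pVs)
  have pq: "pstar q = a * V" by (simp add: q_def pa pVs)
  define e where "e = (\<lambda>l. P * x l + q * y l)"
  define z where "z = (\<lambda>l. zh * y l)"
  have bxe: "bf n A x e = P * a + q" unfolding e_def bf_lin_r by (simp add: a_def bxy)
  have bye: "bf n A y e = P + q * d" unfolding e_def bf_lin_r by (simp add: d_def byx)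
  have Qe: "bf n A e e = 0"
  proof -
    have "bf n A e e = pstar P * (P * a + q) + pstar q * (P + q * d)"
      by (subst (1) e_def, simp only: bf_lin_l bxe bye)
    also have "\<dots> = (Vs * pstar w - V) * (P * a + q) + (a * V) * (P + q * d)"
      by (simp only: pP pq)
    also have "\<dots> = a * V * Vs * (pstar w * w - 1 + a * d)"
      unfolding P_def q_def by algebra
    also have "pstar w * w - 1 + a * d = 0" using Nw by (simp add: E_def)
    finally show ?thesis by simp
  qed
  have bey: "bf n A e y = pstar P + a * V * d"
    unfolding e_def bf_lin_l by (simp add: pq bxy d_def)
  have "pstar P + a * V * d = pstar w * m"
  proof -
    have "pstar w * m = Vs * pstar w - V * (pstar w * w)" by (simp add: m_def algebra_simps)
    also have "\<dots> = Vs * pstar w - V * (1 - a * d)" by (simp add: Nw E_def)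
    finally show ?thesis by (simp add: pP algebra_simps)
  qed
  define \<kappa> where "\<kappa> = \<epsilon> * (- ii) ^ j"
  have k0: "\<kappa> \<noteq> 0" using e0 ii2 by (auto simp: \<kappa>_def)
  have c: "bf n A e z = smult \<kappa> (T * (Z * m))"
  proof -
    have "bf n A e z = zh * bf n A e y" unfolding z_def by (rule bf_scale_r)
    also have "\<dots> = zh * (pstar w * m)" by (simp add: bey \<open>pstar P + a * V * d = pstar w * m\<close>)
    finally show ?thesis by (simp add: pw Z_def \<kappa>_def mult_ac)
  qed
  have Qz: "bf n A z z = h * d"
  proof -
    have "bf n A z z = pstar zh * (zh * d)"
      unfolding z_def bf_scale_l bf_scale_r by (simp add: d_def)
    thus ?thesis using zh(1) by (simp add: mult_ac)
  qed
  have mne: "m \<noteq> 0"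
  proof
    assume "m = 0"
    hence "M \<tau> 0 = 0" using pm[of 0] by simp
    thus False using w01 by (simp add: M_def)
  qed
  have nc: "poly (pstar (Z * m)) b \<noteq> 0" if b1: "poly (Z * m) b = 0" for b
  proof
    assume b2: "poly (pstar (Z * m)) b = 0"
    from b2 have b2': "poly Z (-b) = 0 \<or> M \<tau> (-b) = 0" by (simp add: pm)
    from b1 have b1': "poly Z b = 0 \<or> M \<tau> b = 0" by (simp add: pm)
    show False
    proof (cases "poly Z b = 0")
      case Zb: True
      show False
      proof (cases "poly Z (-b) = 0")
        case True with OS_pair[OF two OSZ Z0 Zb] show False by simp
      next
        case False
        hence "M \<tau> (-b) = 0" using b2' by simp
        hence "\<tau> \<in> B" using Zb unfolding B_def by blast
        with \<tau> show False ..
      qed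
    next
      case Zb: False
      hence Mb: "M \<tau> b = 0" using b1' by simp
      show False
      proof (cases "poly Z (-b) = 0")
        case True
        hence "\<tau> \<in> B" using Mb unfolding B_def by (auto intro!: bexI[of _ "-b"])
        with \<tau> show False ..
      next
        case False
        hence Mmb: "M \<tau> (-b) = 0" using b2' by simp
        define W1 where "W1 = poly w b"
        define W2 where "W2 = poly w (-b)"
        have eq1: "1 - \<tau> * b = (1 + \<tau> * b) * W1" using Mb by (simp add: M_def W1_def)
        have eq2: "1 + \<tau> * b = (1 - \<tau> * b) * W2" using Mmb by (simp add: M_def W2_def)
        have nz: "1 - \<tau> * b \<noteq> 0"
        proof
          assume z1: "1 - \<tau> * b = 0"
          hence "1 + \<tau> * b = 0" using eq2 by simp
          hence "(1 - \<tau> * b) + (1 + \<tau> * b) = 0" using z1 by simp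
          hence "(2::'a) = 0" by (simp add: algebra_simps)
          with two show False by simp
        qed
        have "(1 - \<tau> * b) * (W2 * W1) = 1 - \<tau> * b"
          using eq1 eq2 by (metis mult.assoc mult.commute)
        hence W: "W2 * W1 = 1" using nz by simp
        have "poly E b = W2 * W1" using Nw[symmetric] by (simp add: W1_def W2_def)
        hence "poly E b = 1" using W by simp
        hence adb: "poly (a * d) b = 0" by (simp add: E_def)
        show False
        proof (cases "b = 0")
          case True
          hence "M \<tau> 0 = 0" using Mb by simp
          thus False using w01 by (simp add: M_def)
        next
          case False
          hence "\<tau> \<in> B" unfolding B_def using Mb adb by blast
          with \<tau> show False ..
        qed
      qed
    qed
  qed
  obtain u1 u2 where uu: "u1 * (Z * m) + u2 * pstar (Z * m) = 1"
    using no_common_root_bezout[of "Z * m" "pstar (Z * m)"] nc Zne mne by auto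
  define r1 where "r1 = smult (1 / \<kappa>) (g0 * u1)"
  define r2 where "r2 = smult (1 / (\<kappa> * (-1) ^ j)) (g0 * u2)"
  have k1: "\<kappa> * (-1) ^ j \<noteq> 0" using k0 by simp
  have "1 - bf n A z z = bf n A e z * r1 + pstar (bf n A e z) * r2"
  proof -
    have pc: "pstar (bf n A e z) = smult (\<kappa> * (-1) ^ j) (T * pstar (Z * m))"
      by (simp only: c pstar_smult pstar_mult pT mult_smult_left smult_smult)
    have s1: "bf n A e z * r1 = T * (Z * m) * g0 * u1" using k0
      by (simp only: c r1_def mult_smult_left mult_smult_right smult_smult) (simp add: mult_ac)
    have s2: "pstar (bf n A e z) * r2 = T * pstar (Z * m) * g0 * u2" using k1
      by (simp only: pc r2_def mult_smult_left mult_smult_right smult_smult) (simp add: mult_ac)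
    have "bf n A e z * r1 + pstar (bf n A e z) * r2 = T * g0 * (u1 * (Z * m) + u2 * pstar (Z * m))"
      unfolding s1 s2 by (simp add: algebra_simps)
    also have "\<dots> = 1 - d * h" using uu h(3) by simp
    finally show ?thesis using Qz by (simp add: mult.commute)
  qed
  thus ?thesis by (rule lemmaA[OF two sa Qe])
qed



lemma binary:
  fixes A :: "nat \<Rightarrow> nat \<Rightarrow> 'a::{alg_closed_field,field_gcd} poly"
  assumes two: "(2::'a) \<noteq> 0" and sa: "self_adjoint n A" and bxy: "bf n A x y = 1"
  shows "\<exists>v. bf n A v v = 1"
proof -
  define a where "a = bf n A x x"
  define d where "d = bf n A y y"
  have pa: "pstar a = a" unfolding a_def by (rule pstar_bf[OF sa])
  have pd: "pstar d = d" unfolding d_def by (rule pstar_bf[OF sa])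
  have byx: "bf n A y x = 1" using bf_swap[OF sa, of y x] bxy by simp
  show ?thesis
  proof (cases "a = 0")
    case True
    show ?thesis
      by (rule lemmaA[OF two sa, of x y "1 - bf n A y y" 0]) (use True bxy in \<open>simp_all add: a_def d_def\<close>)
  next
    case a0: False
    show ?thesis
    proof (cases "d = 0")
      case True
      show ?thesis
        by (rule lemmaA[OF two sa, of y x "1 - bf n A x x" 0]) (use True byx in \<open>simp_all add: a_def d_def\<close>)
    next
      case d0: False
      define E where "E = 1 - a * d"
      show ?thesis
      proof (cases "E = 0")
        case True
        hence ad: "a * d = 1" by (simp add: E_def)
        hence "is_unit a" by (metis dvdI)
        hence "degree a = 0" using a0 by (simp add: is_unit_iff_degree)
        then obtain c where c: "a = [:c:]" by (elim degree_eq_zeroE)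
        with a0 have c0: "c \<noteq> 0" by simp
        define k where "k = sq (1 / c)"
        have kk: "k * k = 1 / c" using sq_sq[of "1/c"] by (simp add: k_def power2_eq_square)
        have "bf n A (\<lambda>l. [:k:] * x l) (\<lambda>l. [:k:] * x l) = [:k * k * c:]"
          by (simp only: bf_scale_l bf_scale_r) (simp add: a_def[symmetric] c)
        also have "\<dots> = 1" using kk c0 by (simp add: one_pCons)
        finally show ?thesis by blast
      next
        case E0: False
        show ?thesis
          by (rule binary_main[OF two sa bxy]) (use a0 d0 E0 in \<open>simp_all add: a_def d_def E_def\<close>)
      qed
    qed
  qed
qed


theorem proposition4p1:
  fixes A :: "nat \<Rightarrow> nat \<Rightarrow> 'a::{alg_closed_field,field_gcd} poly" and n :: nat
  assumes "(2::'a) \<noteq> 0"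
    and "self_adjoint n A"
    and "mat_gcd n A = 1"
  shows "\<exists>v :: nat \<Rightarrow> 'a poly. herm_form n A v = 1"
proof -
  obtain x y where "bf n A x y = 1" using exists_pair_one[OF assms(3)] by blast
  from binary[OF assms(1) assms(2) this] obtain v where "bf n A v v = 1" by blast
  thus ?thesis by (auto simp: herm_form_bf)
qed

end
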